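(* For every integer $n>1$, $\mathrm{DE3}(n+2)+\mathrm{DE3}(n-1)$ equals the number of partitions of $n$ into parts none of which is divisible by $4$.
   Context: For a nonnegative integer $n$, $\mathrm{DE3}(n)$ denotes the number of partitions of $n$ in which no even part is repeated, and the largest part is odd and appears exactly once (so $\mathrm{DE3}(0)=0$). Equivalently, $\sum_{n\ge0}\mathrm{DE3}(n)q^n=\sum_{n\ge0}\frac{(-q^2;q^2)_n q^{2n+1}}{(q;q^2)_{n}}$, where $(a;q)_0=1$ and $(a;q)_n=\prod_{j=0}^{n-1}(1-aq^j)$. *)

theory Defs
  imports Main "HOL-Library.Multiset"
begin

definition nat_partitions :: "nat \<Rightarrow> nat multiset set" where
  "nat_partitions n = {p. (\<forall>x\<in>#p. 0 < x) \<and> sum_mset p = n}"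

text \<open>DE3(n): partitions of n in which no even part is repeated, and the largest part
  is odd and appears exactly once (the empty partition has no largest part, so DE3(0)=0).\<close>
definition DE3 :: "nat \<Rightarrow> nat" where
  "DE3 n = card {p \<in> nat_partitions n.
     (\<forall>x\<in>#p. even x \<longrightarrow> count p x \<le> 1) \<and>
     p \<noteq> {#} \<and> odd (Max_mset p) \<and> count p (Max_mset p) = 1}"

definition pnot4 :: "nat \<Rightarrow> nat" where
  "pnot4 n = card {p \<in> nat_partitions n. \<forall>x\<in>#p. \<not> 4 dvd x}"

end

theory Submission
  imports Defs
begin

definition DD :: "nat multiset \<Rightarrow> bool" where
  "DD p \<longleftrightarrow> (\<forall>x\<in>#p. 0 < x) \<and> (\<forall>x\<in>#p. even x \<longrightarrow> count p x \<le> 1)"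

function gl :: "nat \<Rightarrow> nat multiset" where
  "gl x = (if 0 < x \<and> 4 dvd x then gl (x div 2) + gl (x div 2) else {#x#})"
  by auto
termination by (relation "measure id") auto

declare gl.simps[simp del]

definition phi :: "nat multiset \<Rightarrow> nat multiset" where
  "phi p = sum_mset (image_mset gl p)"

lemma rep_plus: "replicate_mset a x + replicate_mset b x = replicate_mset (a+b) x"
  by (rule multiset_eqI) simp

lemma gl_not4: "\<not> 4 dvd x \<Longrightarrow> gl x = {#x#}"
  by (subst gl.simps) auto

lemma gl_pow: "odd m \<Longrightarrow> gl (2^(Suc k) * m) = replicate_mset (2^k) (2*m)"
proof (induction k)
  case 0
  then show ?case by (subst gl.simps) auto
next
  case (Suc k)
  have "0 < (2::nat)^(Suc (Suc k)) * m" using Suc.prems by (simp add: odd_pos)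
  moreover have "4 dvd (2::nat)^(Suc (Suc k)) * m" by simp
  moreover have "(2::nat)^(Suc (Suc k)) * m div 2 = 2^(Suc k) * m" by simp
  ultimately have "gl (2^(Suc (Suc k)) * m) = gl (2^(Suc k) * m) + gl (2^(Suc k) * m)"
    by (subst gl.simps) (simp only: if_True simp_thms)
  also have "\<dots> = replicate_mset (2^Suc k) (2*m)" using Suc
    by (simp add: rep_plus mult_2)
  finally show ?case .
qed

lemma gl_pow': "odd m \<Longrightarrow> gl (2 * 2^k * m) = replicate_mset (2^k) (2*m)"
  using gl_pow[of m k] by simp

lemma gl_odd: "odd x \<Longrightarrow> gl x = {#x#}"
  by (rule gl_not4) (metis dvd_trans even_numeral odd_numeral) 

lemma gl_pos: "0 < x \<Longrightarrow> y \<in># gl x \<Longrightarrow> 0 < y \<and> \<not> 4 dvd y"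
proof (induction x rule: gl.induct)
  case (1 x)
  show ?case
  proof (cases "4 dvd x")
    case True
    then have "gl x = gl (x div 2) + gl (x div 2)" using 1 by (subst gl.simps) auto
    moreover have "0 < x div 2" using 1 True by auto
    ultimately show ?thesis using 1 True by auto
  next
    case False
    then show ?thesis using 1 by (auto simp: gl_not4)
  qed
qed

lemma gl_sum: "sum_mset (gl x) = x"
proof (induction x rule: gl.induct)
  case (1 x)
  show ?case
  proof (cases "0 < x \<and> 4 dvd x")
    case True
    then have "gl x = gl (x div 2) + gl (x div 2)" by (subst gl.simps) auto
    then show ?thesis using 1 True by auto
  next
    case False
    then show ?thesis by (subst gl.simps) auto
  qed
qed

lemma gl_double: "0 < x \<Longrightarrow> even x \<Longrightarrow> gl (2*x) = gl x + gl x"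
  by (subst gl.simps) auto

lemma factor: "0 < (x::nat) \<Longrightarrow> odd x \<or> (\<exists>k m. odd m \<and> x = 2^(Suc k) * m)"
proof (induction x rule: less_induct)
  case (less x)
  show ?case
  proof (cases "odd x")
    case False
    then obtain y where y: "x = 2*y" by auto
    with less have "0 < y" "y < x" by auto
    with less.IH have "odd y \<or> (\<exists>k m. odd m \<and> y = 2^(Suc k) * m)" by blast
    then show ?thesis
    proof
      assume "odd y"
      then have "odd y \<and> x = 2^(Suc 0) * y" using y by simp
      then show ?thesis by blast
    next
      assume "\<exists>k m. odd m \<and> y = 2^(Suc k) * m"
      then obtain k m where "odd m" "y = 2^(Suc k) * m" by blast
      then have "odd m \<and> x = 2^(Suc (Suc k)) * m" using y by simp
      then show ?thesis by blast
    qed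
  next
    case True
    then show ?thesis by blast
  qed
qed

lemma uniq: "odd (a::nat) \<Longrightarrow> odd b \<Longrightarrow> 2^i*a = 2^j*b \<Longrightarrow> i = j \<and> a = b"
proof (induction i arbitrary: j)
  case 0
  then show ?case by (cases j) auto
next
  case (Suc i)
  then show ?case by (cases j) auto
qed

lemma count_phi: "count (phi p) y = sum_mset (image_mset (\<lambda>x. count (gl x) y) p)"
  unfolding phi_def by (induction p) auto

lemma phi_add[simp]: "phi (add_mset x p) = gl x + phi p"
  unfolding phi_def by simp

lemma phi_empty[simp]: "phi {#} = {#}"
  unfolding phi_def by simp

lemma count_gl_odd: "odd y \<Longrightarrow> 0 < x \<Longrightarrow> count (gl x) y = (if x = y then 1 else 0)"
  using factor[of x] by (auto simp: gl_odd gl_pow')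

lemma count_gl_a: "odd m \<Longrightarrow> count (gl (2^(Suc k)*m)) (2*m) = 2^k"
  by (simp add: gl_pow')

lemma count_gl_b: "odd m \<Longrightarrow> 0 < x \<Longrightarrow> (\<forall>k. x \<noteq> 2^(Suc k)*m) \<Longrightarrow> count (gl x) (2*m) = 0"
proof -
  assume a: "odd m" "0 < x" "\<forall>k. x \<noteq> 2^(Suc k)*m"
  from factor[OF a(2)] show ?thesis
  proof
    assume "odd x" then show ?thesis by (auto simp: gl_odd)
  next
    assume "\<exists>k o'. odd o' \<and> x = 2^(Suc k) * o'"
    then obtain k o' where "odd o'" "x = 2^(Suc k) * o'" by blast
    then show ?thesis using a by (auto simp: gl_pow')
  qed
qed

lemma DD_add: "DD (add_mset x p) \<Longrightarrow> DD p"
proof -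
  assume a: "DD (add_mset x p)"
  have "\<forall>y\<in>#p. 0<y" using a by (simp add: DD_def)
  moreover have "\<forall>y\<in>#p. even y \<longrightarrow> count p y \<le> 1"
  proof (intro ballI impI)
    fix y assume "y\<in>#p" "even y"
    then have "count (add_mset x p) y \<le> 1" using a by (simp add: DD_def)
    then show "count p y \<le> 1" by (simp split: if_splits)
  qed
  ultimately show ?thesis by (simp add: DD_def)
qed

lemma count_phi_odd: "(\<forall>x\<in>#p. 0 < x) \<Longrightarrow> odd y \<Longrightarrow> count (phi p) y = count p y"
  by (induction p) (auto simp: count_gl_odd)

definition KK :: "nat multiset \<Rightarrow> nat \<Rightarrow> nat set" where
  "KK p m = {k. 2^(Suc k)*m \<in># p}"

lemma KK_finite: "odd m \<Longrightarrow> finite (KK p m)"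
proof -
  assume m: "odd m"
  have "inj (\<lambda>k. (2::nat)^(Suc k)*m)"
    by (rule injI) (use uniq m in blast)
  then have "finite ((\<lambda>k. (2::nat)^(Suc k)*m) -` set_mset p)"
    by (intro finite_vimageI) auto
  moreover have "KK p m = (\<lambda>k. (2::nat)^(Suc k)*m) -` set_mset p"
    unfolding KK_def by auto
  ultimately show ?thesis by simp
qed

lemma count_phi_even: "DD p \<Longrightarrow> odd m \<Longrightarrow> count (phi p) (2*m) = (\<Sum>k\<in>KK p m. 2^k)"
proof (induction p)
  case empty
  then show ?case by (simp add: KK_def)
next
  case (add x p)
  have Dp: "DD p" using add.prems DD_add by blast
  have x0: "0 < x" using add.prems unfolding DD_def by auto
  have m0: "0 < m" using add.prems(2) by (simp add: odd_pos)
  have IH: "count (phi p) (2*m) = (\<Sum>k\<in>KK p m. 2^k)" using add.IH[OF Dp add.prems(2)] .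
  have fin: "finite (KK p m)" using KK_finite[OF add.prems(2)] .
  show ?case
  proof (cases "\<exists>k. x = 2^(Suc k)*m")
    case True
    then obtain k where k: "x = 2^(Suc k)*m" by blast
    have "count (add_mset x p) x \<le> 1" using add.prems(1) k unfolding DD_def by simp
    then have xp: "x \<notin># p" by (simp add: count_eq_zero_iff)
    have inj: "\<And>j. (2::nat)^(Suc j)*m = 2^(Suc k)*m \<longleftrightarrow> j = k"
      using m0 by simp
    have "KK (add_mset x p) m = insert k (KK p m)"
    proof (rule set_eqI)
      fix j
      show "j \<in> KK (add_mset x p) m \<longleftrightarrow> j \<in> insert k (KK p m)"
        unfolding KK_def mem_Collect_eq set_mset_add_mset_insert insert_iff k inj by blast
    qed
    moreover have "k \<notin> KK p m" using xp k unfolding KK_def by simp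
    moreover have "count (gl x) (2*m) = 2^k" using count_gl_a[OF add.prems(2)] k by simp
    ultimately show ?thesis using IH fin by simp
  next
    case False
    have "KK (add_mset x p) m = KK p m"
    proof (rule set_eqI)
      fix j
      have "(2::nat)^(Suc j)*m \<noteq> x" using False by metis
      then show "j \<in> KK (add_mset x p) m \<longleftrightarrow> j \<in> KK p m"
        unfolding KK_def mem_Collect_eq set_mset_add_mset_insert insert_iff by blast
    qed
    moreover have "count (gl x) (2*m) = 0" using count_gl_b[OF add.prems(2) x0] False by blast
    ultimately show ?thesis using IH by simp
  qed
qed

lemma pow2_sum_less: "T \<subseteq> {..<N} \<Longrightarrow> (\<Sum>a\<in>T. 2^a::nat) < 2^N"
proof (induction N arbitrary: T)
  case 0
  then show ?case by simp
next
  case (Suc N)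
  have fin: "finite T" using Suc.prems finite_subset by blast
  have "T - {N} \<subseteq> {..<N}" using Suc.prems by auto
  then have lt: "(\<Sum>a\<in>T - {N}. 2^a::nat) < 2^N" using Suc.IH by blast
  have "(\<Sum>a\<in>T. 2^a::nat) \<le> 2^N + (\<Sum>a\<in>T - {N}. 2^a)"
  proof (cases "N \<in> T")
    case True
    then show ?thesis using fin by (simp add: sum.remove)
  next
    case False
    then show ?thesis by simp
  qed
  then show ?case using lt by simp
qed

lemma sum_split_N: "finite S \<Longrightarrow> (\<Sum>a\<in>S. 2^a::nat) = (if N \<in> S then 2^N else 0) + (\<Sum>a\<in>S - {N}. 2^a)"
proof (cases "N \<in> S")
  case True
  assume "finite S"
  then show ?thesis using True by (simp add: sum.remove)
next
  case False
  then show ?thesis by simp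
qed

lemma bin_unique_aux: "S \<subseteq> {..<N} \<Longrightarrow> T \<subseteq> {..<N} \<Longrightarrow> (\<Sum>a\<in>S. 2^a::nat) = (\<Sum>a\<in>T. 2^a) \<Longrightarrow> S = T"
proof (induction N arbitrary: S T)
  case 0
  then show ?case by simp
next
  case (Suc N)
  have finS: "finite S" using Suc.prems(1) finite_subset by blast
  have finT: "finite T" using Suc.prems(2) finite_subset by blast
  have S1: "S - {N} \<subseteq> {..<N}" using Suc.prems(1) by auto
  have S2: "T - {N} \<subseteq> {..<N}" using Suc.prems(2) by auto
  have ltS: "(\<Sum>a\<in>S - {N}. 2^a::nat) < 2^N" by (rule pow2_sum_less[OF S1])
  have ltT: "(\<Sum>a\<in>T - {N}. 2^a::nat) < 2^N" by (rule pow2_sum_less[OF S2])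
  have eS: "(\<Sum>a\<in>S. 2^a::nat) = (if N \<in> S then 2^N else 0) + (\<Sum>a\<in>S - {N}. 2^a)"
    by (rule sum_split_N[OF finS])
  have eT: "(\<Sum>a\<in>T. 2^a::nat) = (if N \<in> T then 2^N else 0) + (\<Sum>a\<in>T - {N}. 2^a)"
    by (rule sum_split_N[OF finT])
  define a where "a = (\<Sum>a\<in>S - {N}. 2^a::nat)"
  define b where "b = (\<Sum>a\<in>T - {N}. 2^a::nat)"
  define c where "c = (2::nat)^N"
  have ab: "a < c" "b < c" using ltS ltT unfolding a_def b_def c_def by auto
  have eq: "(if N \<in> S then c else 0) + a = (if N \<in> T then c else 0) + b"
    using eS eT Suc.prems(3) unfolding a_def b_def c_def by argo
  have NN: "N \<in> S \<longleftrightarrow> N \<in> T"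
    using eq ab by (cases "N \<in> S"; cases "N \<in> T") simp_all
  have "a = b" using eq NN by (cases "N \<in> S") simp_all
  then have "(\<Sum>a\<in>S - {N}. 2^a::nat) = (\<Sum>a\<in>T - {N}. 2^a)" unfolding a_def b_def .
  then have "S - {N} = T - {N}" using Suc.IH[OF S1 S2] by blast
  then show ?case using NN by blast
qed

lemma bin_unique: "finite S \<Longrightarrow> finite T \<Longrightarrow> (\<Sum>a\<in>S. 2^a::nat) = (\<Sum>a\<in>T. 2^a) \<Longrightarrow> S = T"
proof -
  assume a: "finite S" "finite T" "(\<Sum>a\<in>S. 2^a::nat) = (\<Sum>a\<in>T. 2^a)"
  have fin: "finite (S \<union> T)" using a by simp
  have "\<And>x. x \<in> S \<union> T \<Longrightarrow> x < Suc (Max (S \<union> T))"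
    using Max_ge[OF fin] by (simp add: le_imp_less_Suc)
  then have "S \<subseteq> {..<Suc (Max (S \<union> T))}" "T \<subseteq> {..<Suc (Max (S \<union> T))}" by auto
  then show ?thesis using bin_unique_aux a(3) by blast
qed

lemma phi_inj: "DD p \<Longrightarrow> DD q \<Longrightarrow> phi p = phi q \<Longrightarrow> p = q"
proof (rule multiset_eqI)
  fix y
  assume Dp: "DD p" and Dq: "DD q" and e: "phi p = phi q"
  have pp: "\<forall>x\<in>#p. 0 < x" and pq: "\<forall>x\<in>#q. 0 < x" using Dp Dq unfolding DD_def by auto
  show "count p y = count q y"
  proof (cases "y = 0")
    case True
    then have "y \<notin># p" "y \<notin># q" using pp pq by auto
    then show ?thesis by (simp add: not_in_iff)
  next
    case False
    then have y0: "0 < y" by simp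
    from factor[OF y0] show ?thesis
    proof
      assume o: "odd y"
      have "count p y = count (phi p) y" using count_phi_odd[OF pp o] by simp
      also have "\<dots> = count (phi q) y" using e by simp
      also have "\<dots> = count q y" using count_phi_odd[OF pq o] by simp
      finally show ?thesis .
    next
      assume "\<exists>k m. odd m \<and> y = 2^(Suc k) * m"
      then obtain k m where m: "odd m" and y: "y = 2^(Suc k) * m" by blast
      have "(\<Sum>k\<in>KK p m. 2^k) = (\<Sum>k\<in>KK q m. (2::nat)^k)"
        using count_phi_even[OF Dp m] count_phi_even[OF Dq m] e by simp
      then have "KK p m = KK q m" using bin_unique KK_finite[OF m] by blast
      then have mem: "y \<in># p \<longleftrightarrow> y \<in># q" unfolding KK_def using y by blast
      have ev: "even y" using y by simp
      have c1: "count p y \<le> 1" if "y \<in># p" using Dp ev that unfolding DD_def by blast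
      have c2: "count q y \<le> 1" if "y \<in># q" using Dq ev that unfolding DD_def by blast
      show ?thesis
      proof (cases "y \<in># p")
        case True
        then have "count p y = 1" "count q y = 1" using c1 c2 mem
          by (auto simp: count_eq_zero_iff[symmetric] intro: le_antisym)
        then show ?thesis by simp
      next
        case False
        have "y \<notin># q" using False mem by blast
        then show ?thesis using False by (metis not_in_iff)
      qed
    qed
  qed
qed


function ac :: "nat multiset \<Rightarrow> nat \<Rightarrow> nat multiset" where
  "ac p x = (if even x \<and> x \<in># p then ac (p - {#x#}) (2*x) else add_mset x p)"
  by auto
termination by (relation "measure (\<lambda>(p,x). size p)") (auto simp: size_Diff1_less)

declare ac.simps[simp del]

lemma ac_props: "DD p \<Longrightarrow> 0 < x \<Longrightarrow>
   DD (ac p x) \<and> sum_mset (ac p x) = sum_mset p + x \<and> phi (ac p x) = phi p + gl x"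
proof (induction p x rule: ac.induct)
  case (1 p x)
  show ?case
  proof (cases "even x \<and> x \<in># p")
    case True
    then have e: "ac p x = ac (p - {#x#}) (2*x)" by (subst ac.simps) simp
    obtain r where pd: "p = add_mset x r" using True by (metis multi_member_split)
    have pr: "p - {#x#} = r" using pd by simp
    have D': "DD r" using DD_add pd 1(2) by blast
    have IH: "DD (ac r (2*x)) \<and> sum_mset (ac r (2*x)) = sum_mset r + 2*x
        \<and> phi (ac r (2*x)) = phi r + gl (2*x)"
      using 1(1)[OF True] D' 1(3) pr by simp
    have s1: "sum_mset p = sum_mset r + x" using pd by simp
    have s2: "phi p = phi r + gl x" using pd by simp
    have g: "gl (2*x) = gl x + gl x" using gl_double 1(3) True by blast
    have e2: "ac p x = ac r (2*x)" using e pr by simp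
    show ?thesis using e2 IH s1 s2 g by (simp add: add.assoc)
  next
    case False
    then have e: "ac p x = add_mset x p" by (subst ac.simps) auto
    have "DD (add_mset x p)"
      unfolding DD_def
    proof (intro conjI ballI impI)
      fix y assume "y \<in># add_mset x p"
      then show "0 < y" using 1(2,3) unfolding DD_def by auto
    next
      fix y assume y: "y \<in># add_mset x p" "even y"
      show "count (add_mset x p) y \<le> 1"
      proof (cases "y = x")
        case True
        then have "x \<notin># p" using False y by simp
        then show ?thesis using True by (simp add: not_in_iff)
      next
        case False
        then show ?thesis using y 1(2) unfolding DD_def by simp
      qed
    qed
    then show ?thesis using e by simp
  qed
qed

lemma phi_surj: "(\<forall>y\<in>#q. 0 < y \<and> \<not> 4 dvd y) \<Longrightarrow> \<exists>p. DD p \<and> phi p = q"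
proof (induction q)
  case empty
  have "DD {#}" unfolding DD_def by simp
  then show ?case by auto
next
  case (add x q)
  then obtain p where p: "DD p" "phi p = q" by auto
  have x: "0 < x" "\<not> 4 dvd x" using add.prems by auto
  have "DD (ac p x) \<and> phi (ac p x) = phi p + gl x" using ac_props[OF p(1) x(1)] by simp
  moreover have "gl x = {#x#}" using gl_not4[OF x(2)] .
  ultimately show ?case using p by auto
qed

lemma phi_sum: "sum_mset (phi p) = sum_mset p"
  by (induction p) (simp_all add: gl_sum)

lemma phi_elems: "\<forall>x\<in>#p. 0 < x \<Longrightarrow> y \<in># phi p \<Longrightarrow> 0 < y \<and> \<not> 4 dvd y"
proof (induction p)
  case empty
  then show ?case by simp
next
  case (add x p)
  then show ?case using gl_pos by auto
qed

definition EE :: "nat \<Rightarrow> nat multiset set" where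
  "EE n = {p \<in> nat_partitions n. \<forall>x\<in>#p. even x \<longrightarrow> count p x \<le> 1}"

lemma pnot4_EE: "pnot4 n = card (EE n)"
proof -
  let ?N = "{p \<in> nat_partitions n. \<forall>x\<in>#p. \<not> 4 dvd x}"
  have DDE: "p \<in> EE n \<longleftrightarrow> DD p \<and> sum_mset p = n" for p
    unfolding EE_def DD_def nat_partitions_def by auto
  have "bij_betw phi (EE n) ?N"
    unfolding bij_betw_def
  proof
    show "inj_on phi (EE n)" using phi_inj DDE by (meson inj_onI)
  next
    show "phi ` EE n = ?N"
    proof
      show "phi ` EE n \<subseteq> ?N"
      proof
        fix q assume "q \<in> phi ` EE n"
        then obtain p where p: "p \<in> EE n" "q = phi p" by blast
        then have "DD p" "sum_mset p = n" using DDE by auto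
        then show "q \<in> ?N" using p phi_elems phi_sum unfolding nat_partitions_def DD_def by auto
      qed
    next
      show "?N \<subseteq> phi ` EE n"
      proof
        fix q assume q: "q \<in> ?N"
        have "\<forall>y\<in>#q. 0 < y \<and> \<not> 4 dvd y" using q unfolding nat_partitions_def by auto
        then obtain p where p: "DD p" "phi p = q" using phi_surj by blast
        have "sum_mset p = n" using phi_sum[of p] p q unfolding nat_partitions_def by auto
        then show "q \<in> phi ` EE n" using p DDE by auto
      qed
    qed
  qed
  then show ?thesis unfolding pnot4_def by (simp add: bij_betw_same_card)
qed


lemma DDE: "p \<in> EE n \<longleftrightarrow> DD p \<and> sum_mset p = n"
  unfolding EE_def DD_def nat_partitions_def by auto

lemma DD_add_iff: "DD (add_mset a s) \<longleftrightarrow> 0 < a \<and> DD s \<and> (even a \<longrightarrow> a \<notin># s)"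
proof
  assume d: "DD (add_mset a s)"
  have "0 < a" using d unfolding DD_def by simp
  moreover have "DD s" using d DD_add by blast
  moreover have "even a \<longrightarrow> a \<notin># s"
  proof
    assume "even a"
    then have "count (add_mset a s) a \<le> 1" using d unfolding DD_def by simp
    then show "a \<notin># s" by (simp add: not_in_iff)
  qed
  ultimately show "0 < a \<and> DD s \<and> (even a \<longrightarrow> a \<notin># s)" by blast
next
  assume h: "0 < a \<and> DD s \<and> (even a \<longrightarrow> a \<notin># s)"
  show "DD (add_mset a s)"
    unfolding DD_def
  proof (intro conjI ballI impI)
    fix y assume "y \<in># add_mset a s"
    then show "0 < y" using h unfolding DD_def by auto
  next
    fix y assume y: "y \<in># add_mset a s" "even y"
    show "count (add_mset a s) y \<le> 1"
    proof (cases "y = a")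
      case True
      then have "a \<notin># s" using h y by simp
      then show ?thesis using True by (simp add: not_in_iff)
    next
      case False
      then show ?thesis using y h unfolding DD_def by simp
    qed
  qed
qed

definition AA :: "nat \<Rightarrow> nat multiset set" where
  "AA N = {p \<in> nat_partitions N.
     (\<forall>x\<in>#p. even x \<longrightarrow> count p x \<le> 1) \<and>
     p \<noteq> {#} \<and> odd (Max_mset p) \<and> count p (Max_mset p) = 1}"

lemma DE3_AA: "DE3 N = card (AA N)"
  unfolding DE3_def AA_def ..

lemma AAE: "p \<in> AA N \<longleftrightarrow> DD p \<and> sum_mset p = N \<and> p \<noteq> {#} \<and> odd (Max_mset p) \<and> count p (Max_mset p) = 1"
  unfolding AA_def DD_def nat_partitions_def by auto

lemma max_add: "\<forall>y\<in>#s. y \<le> a \<Longrightarrow> Max_mset (add_mset a s) = (a::nat)"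
  by (rule Max_eqI) auto

lemma max_ge: "y \<in># p \<Longrightarrow> y \<le> Max_mset (p::nat multiset)"
  by (rule Max_ge) auto

lemma max_in: "p \<noteq> {#} \<Longrightarrow> Max_mset (p::nat multiset) \<in># p"
  by (rule Max_in) auto

lemma AA_struct:
  assumes "p \<in> AA N"
  obtains M r where "p = add_mset M r" "odd M" "\<forall>y\<in>#r. y < M" "DD r" "sum_mset r + M = N"
    "Max_mset p = M"
proof -
  obtain M where M: "Max_mset p = M" by blast
  have h: "DD p" "sum_mset p = N" "p \<noteq> {#}" "odd M" "count p M = 1" using assms AAE M by auto
  have inn: "M \<in># p" using max_in[OF h(3)] M by simp
  define r where "r = p - {#M#}"
  have pr: "p = add_mset M r" unfolding r_def using inn by simp
  have cr: "count r M = 0" using h(5) unfolding r_def by simp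
  have "\<forall>y\<in>#r. y < M"
  proof
    fix y assume y: "y \<in># r"
    then have "y \<in># p" unfolding r_def by (rule in_diffD)
    then have "y \<le> M" using max_ge M by blast
    moreover have "y \<noteq> M" using y cr by (metis not_in_iff)
    ultimately show "y < M" by simp
  qed
  moreover have "DD r" using h(1) pr DD_add by metis
  moreover have "sum_mset r + M = N" using h(2) pr by simp
  ultimately show ?thesis using that pr h(4) M by blast
qed

lemma AA_intro:
  assumes "odd M" "\<forall>y\<in>#r. y < M" "DD r" "sum_mset r + M = N"
  shows "add_mset M r \<in> AA N" "Max_mset (add_mset M r) = M"
proof -
  have mx: "Max_mset (add_mset M r) = M" using assms(2) by (intro max_add) auto
  have nr: "M \<notin># r" using assms(2) by auto
  have "DD (add_mset M r)" using assms(1,3) DD_add_iff odd_pos by blast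
  moreover have "count (add_mset M r) M = 1" using nr by (simp add: not_in_iff)
  ultimately show "add_mset M r \<in> AA N" using mx assms unfolding AAE by (simp add: add.commute)
  show "Max_mset (add_mset M r) = M" by (rule mx)
qed

definition cval :: "nat multiset \<Rightarrow> nat" where
  "cval q = (if odd (Max_mset q) then Max_mset q else Max_mset q - 1)"

lemma cval_add: "odd a \<Longrightarrow> \<forall>y\<in>#s. y \<le> Suc a \<Longrightarrow> cval (add_mset a s) = a"
proof -
  assume a: "odd a" "\<forall>y\<in>#s. y \<le> Suc a"
  let ?M = "Max_mset (add_mset a s)"
  have "a \<le> ?M" by (rule max_ge) simp
  moreover have "?M \<in># add_mset a s" by (rule max_in) simp
  then have "?M \<le> Suc a" using a(2) by auto
  ultimately have "?M = a \<or> ?M = Suc a" by linarith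
  then show ?thesis using a(1) unfolding cval_def by auto
qed

definition f1 :: "nat multiset \<Rightarrow> nat multiset" where
  "f1 p = add_mset (Max_mset p - 2) (p - {#Max_mset p#})"
definition g1 :: "nat multiset \<Rightarrow> nat multiset" where
  "g1 q = add_mset (cval q + 2) (q - {#cval q#})"
definition f2 :: "nat multiset \<Rightarrow> nat multiset" where
  "f2 p = add_mset (Max_mset p + 1) (p - {#Max_mset p#})"
definition g2 :: "nat multiset \<Rightarrow> nat multiset" where
  "g2 q = add_mset (Max_mset q - 1) (q - {#Max_mset q#})"

definition B1 :: "nat \<Rightarrow> nat multiset set" where "B1 n = {q \<in> EE n. cval q \<in># q}"
definition B2 :: "nat \<Rightarrow> nat multiset set" where "B2 n = {q \<in> EE n. cval q \<notin># q}"

lemma f1_ok: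
  assumes "p \<in> AA (n+2)"
  shows "f1 p \<in> B1 n \<and> g1 (f1 p) = p"
proof -
  obtain M r where h: "p = add_mset M r" "odd M" "\<forall>y\<in>#r. y < M" "DD r" "sum_mset r + M = n + 2"
    "Max_mset p = M" using AA_struct[OF assms] by blast
  have M3: "3 \<le> M"
  proof (rule ccontr)
    assume "\<not> 3 \<le> M"
    then have "M = 1" using h(2) by presburger
    have "\<not> (y \<in># r)" for y
    proof
      assume "y \<in># r"
      then have "y < 1" "0 < y" using h(3) h(4) \<open>M = 1\<close> unfolding DD_def by auto
      then show False by simp
    qed
    then have "r = {#}" by (metis multiset_nonemptyE)
    then show False using h(5) \<open>M = 1\<close> by simp
  qed
  have fp: "f1 p = add_mset (M - 2) r" unfolding f1_def using h(1,6) by simp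
  have o: "odd (M - 2)" using h(2) M3 by presburger
  have le: "\<forall>y\<in>#r. y \<le> Suc (M - 2)" using h(3) M3 by auto
  have cv: "cval (f1 p) = M - 2" unfolding fp by (rule cval_add[OF o le])
  have "DD (f1 p)" unfolding fp DD_add_iff using h(4) o M3 by simp
  moreover have "sum_mset (f1 p) = n" unfolding fp using h(5) M3 by simp
  ultimately have "f1 p \<in> B1 n" unfolding B1_def DDE using cv fp by simp
  moreover have "g1 (f1 p) = p" unfolding g1_def cv using fp h(1) M3 by simp
  ultimately show ?thesis by blast
qed


lemma g1_ok:
  assumes "q \<in> B1 n"
  shows "g1 q \<in> AA (n+2) \<and> f1 (g1 q) = q"
proof -
  obtain c where c: "cval q = c" by blast
  have q: "DD q" "sum_mset q = n" "c \<in># q" using assms c unfolding B1_def DDE by auto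
  have ne: "q \<noteq> {#}" using q(3) by auto
  obtain Mq where Mq: "Max_mset q = Mq" by blast
  have Mqin: "Mq \<in># q" using max_in[OF ne] Mq by simp
  have Mq0: "0 < Mq" using q(1) Mqin unfolding DD_def by auto
  have oc: "odd c \<and> Mq \<le> Suc c"
  proof (cases "odd Mq")
    case True
    then have "c = Mq" using c Mq unfolding cval_def by simp
    then show ?thesis using True by simp
  next
    case False
    then have "c = Mq - 1" using c Mq unfolding cval_def by simp
    moreover have "2 \<le> Mq" using False Mq0 by presburger
    ultimately show ?thesis using False by presburger
  qed
  define s where "s = q - {#c#}"
  have qs: "q = add_mset c s" unfolding s_def using q(3) by simp
  have sle: "\<forall>y\<in>#s. y \<le> Suc c"
  proof
    fix y assume "y \<in># s"
    then have "y \<in># q" unfolding s_def by (rule in_diffD)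
    then have "y \<le> Mq" using max_ge Mq by blast
    then show "y \<le> Suc c" using oc by simp
  qed
  have gq: "g1 q = add_mset (c + 2) s" unfolding g1_def c s_def ..
  have Ds: "DD s" using q(1) qs DD_add by metis
  have "add_mset (c+2) s \<in> AA (n+2)" "Max_mset (add_mset (c+2) s) = c + 2"
  proof -
    have o: "odd (c+2)" using oc by simp
    have lt: "\<forall>y\<in>#s. y < c + 2" using sle by auto
    have "sum_mset s + (c + 2) = n + 2" using q(2) qs by simp
    then show "add_mset (c+2) s \<in> AA (n+2)" "Max_mset (add_mset (c+2) s) = c + 2"
      using AA_intro[OF o lt Ds] by auto
  qed
  moreover have "f1 (add_mset (c+2) s) = q" unfolding f1_def using calculation(2) qs by simp
  ultimately show ?thesis using gq by simp
qed

lemma f2_ok: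
  assumes "p \<in> AA (n - 1)" "2 \<le> n"
  shows "f2 p \<in> B2 n \<and> g2 (f2 p) = p"
proof -
  obtain M r where h: "p = add_mset M r" "odd M" "\<forall>y\<in>#r. y < M" "DD r" "sum_mset r + M = n - 1"
    "Max_mset p = M" using AA_struct[OF assms(1)] by blast
  have fp: "f2 p = add_mset (M + 1) r" unfolding f2_def using h(1,6) by simp
  have nr: "M + 1 \<notin># r" "M \<notin># r" using h(3) by auto
  have mx: "Max_mset (f2 p) = M + 1" unfolding fp using h(3) by (intro max_add) auto
  have cv: "cval (f2 p) = M" unfolding cval_def mx using h(2) by simp
  have "DD (f2 p)" unfolding fp DD_add_iff using h(4) nr by simp
  moreover have "sum_mset (f2 p) = n" unfolding fp using h(5) assms(2) by simp
  moreover have "cval (f2 p) \<notin># f2 p"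
  proof -
    have "M \<notin># f2 p" unfolding fp using nr by simp
    then show ?thesis using cv by simp
  qed
  ultimately have "f2 p \<in> B2 n" unfolding B2_def DDE by simp
  moreover have "g2 (f2 p) = p" unfolding g2_def mx using fp h(1) by simp
  ultimately show ?thesis by blast
qed

lemma g2_ok:
  assumes "q \<in> B2 n" "2 \<le> n"
  shows "g2 q \<in> AA (n - 1) \<and> f2 (g2 q) = q"
proof -
  have q: "DD q" "sum_mset q = n" "cval q \<notin># q" using assms unfolding B2_def DDE by auto
  have ne: "q \<noteq> {#}" using q(2) assms(2) by auto
  obtain Mq where Mq: "Max_mset q = Mq" by blast
  have Mqin: "Mq \<in># q" using max_in[OF ne] Mq by simp
  have Mq0: "0 < Mq" using q(1) Mqin unfolding DD_def by auto
  have ev: "even Mq"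
  proof (rule ccontr)
    assume "odd Mq"
    then have "cval q = Mq" using Mq unfolding cval_def by simp
    then show False using q(3) Mqin by simp
  qed
  have M2: "2 \<le> Mq" using ev Mq0 by presburger
  have nm1: "Mq - 1 \<notin># q" using q(3) ev Mq unfolding cval_def by simp
  have c1: "count q Mq = 1"
  proof -
    have "count q Mq \<le> 1" using q(1) Mqin ev unfolding DD_def by blast
    moreover have "count q Mq \<noteq> 0" using Mqin by (simp add: not_in_iff[symmetric])
    ultimately show ?thesis by linarith
  qed
  define s where "s = q - {#Mq#}"
  have qs: "q = add_mset Mq s" unfolding s_def using Mqin by simp
  have cs: "count s Mq = 0" using c1 unfolding s_def by simp
  have slt: "\<forall>y\<in>#s. y < Mq - 1"
  proof
    fix y assume y: "y \<in># s"
    then have yq: "y \<in># q" unfolding s_def by (rule in_diffD)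
    then have "y \<le> Mq" using max_ge Mq by blast
    moreover have "y \<noteq> Mq" using y cs by (metis not_in_iff)
    moreover have "y \<noteq> Mq - 1" using yq nm1 by blast
    ultimately show "y < Mq - 1" by simp
  qed
  have gq: "g2 q = add_mset (Mq - 1) s" unfolding g2_def Mq s_def ..
  have Ds: "DD s" using q(1) qs DD_add by metis
  have o: "odd (Mq - 1)" using ev M2 by presburger
  have "sum_mset s + (Mq - 1) = n - 1" using q(2) qs M2 by simp
  then have A: "add_mset (Mq - 1) s \<in> AA (n - 1)" "Max_mset (add_mset (Mq - 1) s) = Mq - 1"
    using AA_intro[OF o slt Ds] by auto
  moreover have "f2 (add_mset (Mq - 1) s) = q" unfolding f2_def using A(2) qs M2 by simp
  ultimately show ?thesis using gq by simp
qed

lemma elem_le_sum: "y \<in># p \<Longrightarrow> y \<le> sum_mset (p::nat multiset)"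
proof -
  assume "y \<in># p"
  then obtain r where "p = add_mset y r" by (metis multi_member_split)
  then show ?thesis by simp
qed

lemma size_le_sum: "\<forall>x\<in>#p. 0 < x \<Longrightarrow> size p \<le> sum_mset (p::nat multiset)"
  by (induction p) auto

lemma finite_EE: "finite (EE n)"
proof -
  have "EE n \<subseteq> (\<Union>k\<in>{..n}. multisets_of_size {1..n} k)"
  proof
    fix p assume "p \<in> EE n"
    then have p: "\<forall>x\<in>#p. 0 < x" "sum_mset p = n" unfolding EE_def nat_partitions_def by auto
    have "set_mset p \<subseteq> {1..n}" using p elem_le_sum by fastforce
    moreover have "size p \<le> n" using size_le_sum[OF p(1)] p(2) by simp
    ultimately show "p \<in> (\<Union>k\<in>{..n}. multisets_of_size {1..n} k)"
      unfolding multisets_of_size_def by auto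
  qed
  moreover have "finite (\<Union>k\<in>{..n}. multisets_of_size {1..n} k)" by auto
  ultimately show ?thesis by (rule finite_subset)
qed

theorem main_thm:
  fixes n :: nat
  assumes "n > 1"
  shows "DE3 (n + 2) + DE3 (n - 1) = pnot4 n"
proof -
  have n2: "2 \<le> n" using assms by simp
  have b1: "bij_betw f1 (AA (n+2)) (B1 n)"
    by (rule bij_betw_byWitness[where f' = g1]) (use f1_ok g1_ok in blast)+
  have b2: "bij_betw f2 (AA (n-1)) (B2 n)"
    by (rule bij_betw_byWitness[where f' = g2]) (use f2_ok g2_ok n2 in blast)+
  have "EE n = B1 n \<union> B2 n" "B1 n \<inter> B2 n = {}" unfolding B1_def B2_def by auto
  moreover have "finite (B1 n)" "finite (B2 n)" using finite_EE unfolding B1_def B2_def by auto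
  ultimately have "card (EE n) = card (B1 n) + card (B2 n)" by (simp add: card_Un_disjoint)
  then show ?thesis using bij_betw_same_card[OF b1] bij_betw_same_card[OF b2]
    by (simp add: DE3_AA pnot4_EE)
qed

theorem corollary3:
  fixes n :: nat
  assumes "n > 1"
  shows "DE3 (n + 2) + DE3 (n - 1) = pnot4 n"
  using main_thm[OF assms] .

end
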